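(* Let $n\ge2$ and let $Q$ be an $n$-pre-admissible quiver. Then there exists a flow path in $Q$ if and only if $Q\neq A_1$ and $Q\ne\tilde{A}_m$ for every $m\ge1$.
   Context: Quivers are finite and connected. $\delta(v)=(\delta^-(v),\delta^+(v))$ counts arrows ending/starting at $v$. $Q$ is $n$-pre-admissible if (i) every $\delta(v)\in\{(0,0),(0,1),(1,0),(1,1),(1,2),(2,1)\}$, with $(2,2)$ also allowed when $n=2$; (ii) at most one arrow from any vertex to any vertex; (iii) $\delta^+(v)+\delta^-(u)\le3$ for every arrow $v\to u$. A ($k$-)flow path ($k\ge2$) is a path $v_1\to v_2\to\cdots\to v_k$ in $Q$ such that $\delta(v_s)=(1,1)$ if and only if $1<s<k$. $A_1$ is the one-vertex quiver without arrows; $\tilde A_m$ is the oriented cycle $1\to\cdots\to m\to1$ (a loop if $m=1$). *)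

theory Defs
  imports Main
begin

definition indeg :: "'a set \<Rightarrow> ('a \<Rightarrow> 'v) \<Rightarrow> 'v \<Rightarrow> nat" where
  "indeg A t v = card {a \<in> A. t a = v}"

definition outdeg :: "'a set \<Rightarrow> ('a \<Rightarrow> 'v) \<Rightarrow> 'v \<Rightarrow> nat" where
  "outdeg A s v = card {a \<in> A. s a = v}"

definition deg :: "'a set \<Rightarrow> ('a \<Rightarrow> 'v) \<Rightarrow> ('a \<Rightarrow> 'v) \<Rightarrow> 'v \<Rightarrow> nat \<times> nat" where
  "deg A s t v = (indeg A t v, outdeg A s v)"

definition undirected_adj :: "'a set \<Rightarrow> ('a \<Rightarrow> 'v) \<Rightarrow> ('a \<Rightarrow> 'v) \<Rightarrow> ('v \<times> 'v) set" where
  "undirected_adj A s t = {(u, w). \<exists>a\<in>A. (s a = u \<and> t a = w) \<or> (s a = w \<and> t a = u)}"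

definition quiver :: "'v set \<Rightarrow> 'a set \<Rightarrow> ('a \<Rightarrow> 'v) \<Rightarrow> ('a \<Rightarrow> 'v) \<Rightarrow> bool" where
  "quiver V A s t \<longleftrightarrow> finite V \<and> finite A \<and> (\<forall>a\<in>A. s a \<in> V \<and> t a \<in> V)
     \<and> V \<noteq> {} \<and> (\<forall>u\<in>V. \<forall>w\<in>V. (u, w) \<in> (undirected_adj A s t)\<^sup>*)"

definition pre_admissible :: "nat \<Rightarrow> 'v set \<Rightarrow> 'a set \<Rightarrow> ('a \<Rightarrow> 'v) \<Rightarrow> ('a \<Rightarrow> 'v) \<Rightarrow> bool" where
  "pre_admissible n V A s t \<longleftrightarrow>
     (\<forall>v\<in>V. deg A s t v \<in> {(0,0),(0,1),(1,0),(1,1),(1,2),(2,1)}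
              \<or> (n = 2 \<and> deg A s t v = (2,2)))
   \<and> (\<forall>a\<in>A. \<forall>b\<in>A. s a = s b \<and> t a = t b \<longrightarrow> a = b)
   \<and> (\<forall>a\<in>A. outdeg A s (s a) + indeg A t (t a) \<le> 3)"

definition flow_path :: "'v set \<Rightarrow> 'a set \<Rightarrow> ('a \<Rightarrow> 'v) \<Rightarrow> ('a \<Rightarrow> 'v) \<Rightarrow> 'v list \<Rightarrow> 'a list \<Rightarrow> bool" where
  "flow_path V A s t vs as \<longleftrightarrow>
     length vs \<ge> 2 \<and> length as = length vs - 1 \<and> set as \<subseteq> A
   \<and> (\<forall>i < length as. s (as ! i) = vs ! i \<and> t (as ! i) = vs ! (i + 1))
   \<and> (\<forall>i < length vs. deg A s t (vs ! i) = (1,1) \<longleftrightarrow> (0 < i \<and> i < length vs - 1))"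

definition has_flow_path :: "'v set \<Rightarrow> 'a set \<Rightarrow> ('a \<Rightarrow> 'v) \<Rightarrow> ('a \<Rightarrow> 'v) \<Rightarrow> bool" where
  "has_flow_path V A s t \<longleftrightarrow> (\<exists>vs as. flow_path V A s t vs as)"

definition is_A1 :: "'v set \<Rightarrow> 'a set \<Rightarrow> bool" where
  "is_A1 V A \<longleftrightarrow> card V = 1 \<and> A = {}"

text \<open>Q is isomorphic to the oriented cycle 1 -> 2 -> ... -> m -> 1 (a loop if m = 1),
  vertices indexed by {0..<m}.\<close>
definition is_cyclic_A :: "nat \<Rightarrow> 'v set \<Rightarrow> 'a set \<Rightarrow> ('a \<Rightarrow> 'v) \<Rightarrow> ('a \<Rightarrow> 'v) \<Rightarrow> bool" where
  "is_cyclic_A m V A s t \<longleftrightarrow> (\<exists>f g. bij_betw f {0..<m} V \<and> bij_betw g {0..<m} A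
     \<and> (\<forall>i<m. s (g i) = f i \<and> t (g i) = f ((i + 1) mod m)))"

end

theory Submission
  imports Defs
begin

lemma card1_uniq: "card X = 1 \<Longrightarrow> x \<in> X \<Longrightarrow> y \<in> X \<Longrightarrow> x = y"
  by (metis card_1_singletonE singletonD)

lemma card1_ex: "card X = (1::nat) \<Longrightarrow> \<exists>x. x \<in> X"
  by (metis card_1_singletonE singletonI)

lemma walk_aux:
  assumes out: "\<And>v. M v \<Longrightarrow> \<exists>b\<in>A. s b = v"
  and uniq: "\<And>a b. a\<in>A \<Longrightarrow> b\<in>A \<Longrightarrow> M (t a) \<Longrightarrow> t a = t b \<Longrightarrow> a = b"
  and u: "\<not> M u" and a0: "a0 \<in> A" "s a0 = u"
  shows "(\<exists>k f g. (\<forall>i\<le>k. g i \<in> A \<and> s (g i) = f i \<and> t (g i) = f (Suc i)) \<and> f 0 = u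
            \<and> (\<forall>i. 1 \<le> i \<and> i \<le> k \<longrightarrow> M (f i)) \<and> \<not> M (f (Suc k))) \<or>
     (\<exists>f g. (\<forall>i\<le>k. g i \<in> A \<and> s (g i) = f i \<and> t (g i) = f (Suc i)) \<and> f 0 = u
            \<and> (\<forall>i. 1 \<le> i \<and> i \<le> Suc k \<longrightarrow> M (f i)) \<and> inj_on f {0..Suc k})"
proof (induction k)
  case 0
  show ?case
  proof (cases "M (t a0)")
    case True
    let ?f = "\<lambda>i::nat. if i = 0 then u else t a0"
    have "{0..Suc 0} = {0, 1::nat}" by auto
    then have "inj_on ?f {0..Suc 0}" using True u by (auto simp: inj_on_def)
    then show ?thesis using True a0
      apply - apply (rule disjI2)
      apply (rule exI[of _ ?f], rule exI[of _ "\<lambda>_. a0"]) by auto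
  next
    case False
    show ?thesis apply (rule disjI1)
      apply (rule exI[of _ 0], rule exI[of _ "\<lambda>i::nat. if i = 0 then u else t a0"],
             rule exI[of _ "\<lambda>_. a0"]) using False a0 by auto
  qed
next
  case (Suc k)
  then show ?case
  proof
    assume "\<exists>k f g. (\<forall>i\<le>k. g i \<in> A \<and> s (g i) = f i \<and> t (g i) = f (Suc i)) \<and> f 0 = u
            \<and> (\<forall>i. 1 \<le> i \<and> i \<le> k \<longrightarrow> M (f i)) \<and> \<not> M (f (Suc k))"
    then show ?thesis by (rule disjI1)
  next
    assume "\<exists>f g. (\<forall>i\<le>k. g i \<in> A \<and> s (g i) = f i \<and> t (g i) = f (Suc i)) \<and> f 0 = u
            \<and> (\<forall>i. 1 \<le> i \<and> i \<le> Suc k \<longrightarrow> M (f i)) \<and> inj_on f {0..Suc k}"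
    then obtain f g where P: "\<forall>i\<le>k. g i \<in> A \<and> s (g i) = f i \<and> t (g i) = f (Suc i)"
      "f 0 = u" "\<forall>i. 1 \<le> i \<and> i \<le> Suc k \<longrightarrow> M (f i)" "inj_on f {0..Suc k}" by blast
    have "M (f (Suc k))" using P(3) by simp
    then obtain b where b: "b\<in>A" "s b = f (Suc k)" using out by blast
    define f' where "f' = f(Suc (Suc k) := t b)"
    define g' where "g' = g(Suc k := b)"
    have path: "\<forall>i\<le>Suc k. g' i \<in> A \<and> s (g' i) = f' i \<and> t (g' i) = f' (Suc i)"
      using P(1) b by (auto simp: f'_def g'_def le_Suc_eq)
    have f0: "f' 0 = u" using P(2) by (simp add: f'_def)
    have mid: "\<forall>i. 1 \<le> i \<and> i \<le> Suc k \<longrightarrow> M (f' i)" using P(3) by (auto simp: f'_def)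
    show ?thesis
    proof (cases "M (t b)")
      case False
      then show ?thesis using path f0 mid
        by (intro disjI1 exI[of _ "Suc k"] exI[of _ f'] exI[of _ g']) (simp add: f'_def)
    next
      case True
      have notin: "t b \<notin> f ` {0..Suc k}"
      proof
        assume "t b \<in> f ` {0..Suc k}"
        then obtain j where j: "j \<le> Suc k" "f j = t b" by auto
        show False
        proof (cases j)
          case 0 then show False using j P(2) u True by simp
        next
          case (Suc i)
          have ik: "i \<le> k" using j Suc by simp
          then have gi: "g i \<in> A" "s (g i) = f i" "t (g i) = f (Suc i)" using P(1) by auto
          have "g i = b" using uniq[OF gi(1) b(1)] gi(3) j Suc True by simp
          then have "f i = f (Suc k)" using gi(2) b(2) by simp
          then have "i = Suc k" using P(4) ik by (auto dest: inj_onD)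
          then show False using ik by simp
        qed
      qed
      have eqs: "{0..Suc (Suc k)} = insert (Suc (Suc k)) {0..Suc k}" by auto
      have im: "f' ` {0..Suc k} = f ` {0..Suc k}" by (auto simp: f'_def)
      have "inj_on f' {0..Suc k}" using P(4) by (simp add: f'_def inj_on_def)
      moreover have "f' (Suc (Suc k)) \<notin> f' ` ({0..Suc k} - {Suc (Suc k)})"
        using notin im by (simp add: f'_def)
      ultimately have "inj_on f' {0..Suc (Suc k)}" unfolding eqs inj_on_insert by blast
      moreover have "\<forall>i. 1 \<le> i \<and> i \<le> Suc (Suc k) \<longrightarrow> M (f' i)"
        using mid True by (auto simp: le_Suc_eq f'_def)
      ultimately show ?thesis using path f0
        by (intro disjI2 exI[of _ f'] exI[of _ g']) blast
    qed
  qed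
qed

lemma walk:
  assumes fin: "finite V" and AV: "\<forall>a\<in>A. s a \<in> V \<and> t a \<in> V"
  and out: "\<And>v. M v \<Longrightarrow> \<exists>b\<in>A. s b = v"
  and uniq: "\<And>a b. a\<in>A \<Longrightarrow> b\<in>A \<Longrightarrow> M (t a) \<Longrightarrow> t a = t b \<Longrightarrow> a = b"
  and u: "\<not> M u" and a0: "a0 \<in> A" "s a0 = u"
  shows "\<exists>k f g. (\<forall>i\<le>k. g i \<in> A \<and> s (g i) = f i \<and> t (g i) = f (Suc i)) \<and> f 0 = u
            \<and> (\<forall>i. 1 \<le> i \<and> i \<le> k \<longrightarrow> M (f i)) \<and> \<not> M (f (Suc k))"
proof -
  note W = walk_aux[of M A s t u a0 "card V", OF out uniq u a0]
  show ?thesis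
  proof (rule ccontr)
    assume nt: "\<not> ?thesis"
    then obtain f g where P: "\<forall>i\<le>card V. g i \<in> A \<and> s (g i) = f i \<and> t (g i) = f (Suc i)"
      "inj_on f {0..Suc (card V)}" using W by blast
    have "f ` {0..Suc (card V)} \<subseteq> V"
    proof
      fix x assume "x \<in> f ` {0..Suc (card V)}"
      then obtain i where i: "i \<le> Suc (card V)" "x = f i" by auto
      show "x \<in> V"
      proof (cases "i = Suc (card V)")
        case True then show ?thesis using P(1) AV i by (metis le_refl)
      next
        case False then show ?thesis using P(1) AV i by (metis le_Suc_eq)
      qed
    qed
    then have "card {0..Suc (card V)} \<le> card V" using card_inj_on_le[OF P(2) _ fin] by blast
    then show False by simp
  qed
qed

lemma cyc_mid:
  assumes "is_cyclic_A m V A s t" "v \<in> V"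
  shows "deg A s t v = (1,1)"
proof -
  obtain f g where fg: "bij_betw f {0..<m} V" "bij_betw g {0..<m} A"
    "\<forall>i<m. s (g i) = f i \<and> t (g i) = f ((i + 1) mod m)"
    using assms(1) unfolding is_cyclic_A_def by blast
  obtain j where j: "j < m" "v = f j" using fg(1) assms(2) unfolding bij_betw_def by auto
  have finj: "\<And>x y. x < m \<Longrightarrow> y < m \<Longrightarrow> f x = f y \<Longrightarrow> x = y"
    using fg(1) unfolding bij_betw_def inj_on_def by auto
  have gA: "\<And>a. a \<in> A \<Longrightarrow> \<exists>i<m. a = g i" using fg(2) unfolding bij_betw_def by auto
  have gin: "\<And>i. i < m \<Longrightarrow> g i \<in> A" using fg(2) unfolding bij_betw_def by auto
  have o: "{a\<in>A. s a = v} = {g j}"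
  proof
    show "{a\<in>A. s a = v} \<subseteq> {g j}"
    proof
      fix a assume "a \<in> {a\<in>A. s a = v}"
      then obtain i where "i < m" "a = g i" "s a = v" using gA by auto
      then show "a \<in> {g j}" using fg(3) finj j by auto
    qed
  qed (use gin j fg(3) in auto)
  define j' where "j' = (if j = 0 then m - 1 else j - 1)"
  have j'm: "j' < m" "(j' + 1) mod m = j" using j unfolding j'_def by auto
  have ii: "{a\<in>A. t a = v} = {g j'}"
  proof
    show "{a\<in>A. t a = v} \<subseteq> {g j'}"
    proof
      fix a assume "a \<in> {a\<in>A. t a = v}"
      then obtain i where i: "i < m" "a = g i" "t a = v" using gA by auto
      then have "f ((i+1) mod m) = f j" using fg(3) j by auto
      moreover have "(i+1) mod m < m" using i by auto
      ultimately have "(i+1) mod m = j" using finj j by blast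
      then have "i = j'" unfolding j'_def using i(1)
        by (cases "i + 1 = m") auto
      then show "a \<in> {g j'}" using i by auto
    qed
  qed (use gin j'm j fg(3) in auto)
  show ?thesis unfolding deg_def indeg_def outdeg_def using o ii by simp
qed

lemma all_mid_cyclic:
  assumes q: "quiver V A s t" and mid: "\<forall>v\<in>V. indeg A t v = 1 \<and> outdeg A s v = 1"
  shows "\<exists>m\<ge>1. is_cyclic_A m V A s t"
proof -
  have fin: "finite V" and AV: "\<forall>a\<in>A. s a \<in> V \<and> t a \<in> V" and ne: "V \<noteq> {}"
    and conn: "\<forall>u\<in>V. \<forall>w\<in>V. (u, w) \<in> (undirected_adj A s t)\<^sup>*"
    using q unfolding quiver_def by auto
  obtain v0 where v0: "v0 \<in> V" using ne by auto
  define out where "out v = (SOME a. a \<in> A \<and> s a = v)" for v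
  have outp: "out v \<in> A \<and> s (out v) = v" if "v \<in> V" for v
  proof -
    have "\<exists>a. a \<in> {a\<in>A. s a = v}" using card1_ex mid that unfolding outdeg_def by blast
    then show ?thesis unfolding out_def by (metis (mono_tags, lifting) mem_Collect_eq someI_ex)
  qed
  have out_uniq: "out (s a) = a" if "a \<in> A" for a
  proof -
    have "s a \<in> V" using AV that by auto
    then show ?thesis using card1_uniq[of "{b\<in>A. s b = s a}" "out (s a)" a] mid outp that
      unfolding outdeg_def by auto
  qed
  have in_uniq: "a = b" if "a \<in> A" "b \<in> A" "t a = t b" for a b
  proof -
    have "t a \<in> V" using AV that by auto
    then show ?thesis using card1_uniq[of "{c\<in>A. t c = t a}" a b] mid that
      unfolding indeg_def by auto
  qed
  define nxt where "nxt v = t (out v)" for v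
  have nxtV: "nxt v \<in> V" if "v \<in> V" for v using outp[OF that] AV unfolding nxt_def by auto
  have nxt_inj: "v = w" if "v \<in> V" "w \<in> V" "nxt v = nxt w" for v w
  proof -
    have "out v = out w" using in_uniq outp that unfolding nxt_def by auto
    then show ?thesis using outp that by metis
  qed
  define f where "f i = (nxt ^^ i) v0" for i
  have fV: "f i \<in> V" for i by (induction i) (auto simp: f_def v0 nxtV)
  have fSuc: "f (Suc i) = nxt (f i)" for i by (simp add: f_def)
  have cancel: "f i = f j" if "f (i + d) = f (j + d)" for i j d
    using that
  proof (induction d)
    case 0 then show ?case by simp
  next
    case (Suc d)
    then have "nxt (f (i + d)) = nxt (f (j + d))" by (simp add: fSuc[symmetric])
    then have "f (i + d) = f (j + d)" using nxt_inj fV by blast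
    then show ?case using Suc by blast
  qed
  have "\<not> inj_on f {0..card V}"
  proof
    assume "inj_on f {0..card V}"
    then have "card {0..card V} \<le> card V" using card_inj_on_le[OF _ _ fin] fV by blast
    then show False by simp
  qed
  then obtain i j where ij: "i \<noteq> j" "f i = f j" unfolding inj_on_def by blast
  have "\<exists>p>0. f p = v0"
  proof (cases "i < j")
    case True
    then have "f (0 + i) = f ((j - i) + i)" using ij by simp
    then have "f 0 = f (j - i)" by (rule cancel)
    then show ?thesis using True by (intro exI[of _ "j - i"]) (auto simp: f_def)
  next
    case False
    then have "f (0 + j) = f ((i - j) + j)" using ij by simp
    then have "f 0 = f (i - j)" by (rule cancel)
    then show ?thesis using False ij by (intro exI[of _ "i - j"]) (auto simp: f_def)
  qed
  define m where "m = (LEAST p. 0 < p \<and> f p = v0)"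
  have m: "0 < m" "f m = v0" using LeastI_ex[OF \<open>\<exists>p>0. f p = v0\<close>] unfolding m_def by auto
  have mmin: "f p \<noteq> v0" if "0 < p" "p < m" for p
    using not_less_Least[of p "\<lambda>p. 0 < p \<and> f p = v0"] that unfolding m_def by auto
  have f0: "f 0 = v0" by (simp add: f_def)
  have finj: "inj_on f {0..<m}"
  proof (rule inj_onI)
    fix x y assume xy: "x \<in> {0..<m}" "y \<in> {0..<m}" "f x = f y"
    show "x = y"
    proof (rule ccontr)
      assume "x \<noteq> y"
      then consider "x < y" | "y < x" by linarith
      then show False
      proof cases
        case 1
        then have "f (0 + x) = f ((y - x) + x)" using xy by simp
        then have "f 0 = f (y - x)" by (rule cancel)
        moreover have "0 < y - x" "y - x < m" using 1 xy by auto
        ultimately show False using mmin[of "y - x"] f0 by auto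
      next
        case 2
        then have "f (0 + y) = f ((x - y) + y)" using xy by simp
        then have "f 0 = f (x - y)" by (rule cancel)
        moreover have "0 < x - y" "x - y < m" using 2 xy by auto
        ultimately show False using mmin[of "x - y"] f0 by auto
      qed
    qed
  qed
  let ?S = "f ` {0..<m}"
  have closed: "y \<in> ?S" if xy: "(x, y) \<in> undirected_adj A s t" "x \<in> ?S" for x y
  proof -
    obtain a where a: "a \<in> A" "(s a = x \<and> t a = y) \<or> (s a = y \<and> t a = x)"
      using xy(1) unfolding undirected_adj_def by blast
    obtain i where i: "i < m" "x = f i" using xy(2) by auto
    show ?thesis
    proof (cases "s a = x \<and> t a = y")
      case True
      then have "y = nxt (f i)" using out_uniq[OF a(1)] i unfolding nxt_def by auto
      then have y: "y = f (Suc i)" by (simp add: fSuc)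
      show ?thesis
      proof (cases "Suc i < m")
        case True then show ?thesis using y by auto
      next
        case False then have "Suc i = m" using i by simp
        then have "y = f 0" using y m f0 by simp
        then show ?thesis using m(1) by auto
      qed
    next
      case False
      then have sa: "s a = y" "t a = x" using a by auto
      have yV: "y \<in> V" using AV a sa by auto
      have ny: "nxt y = x" using out_uniq[OF a(1)] sa unfolding nxt_def by simp
      show ?thesis
      proof (cases i)
        case 0
        have "x = nxt (f (m - 1))" using i 0 f0 m fSuc[of "m - 1"] by simp
        then have "y = f (m - 1)" using nxt_inj[OF yV fV] ny by simp
        then show ?thesis using m by auto
      next
        case (Suc i')
        have "x = nxt (f i')" using i Suc fSuc by simp
        then have "y = f i'" using nxt_inj[OF yV fV] ny by simp
        then show ?thesis using Suc i by auto
      qed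
    qed
  qed
  have cover: "w \<in> ?S" if "w \<in> V" for w
  proof -
    have "(v0, w) \<in> (undirected_adj A s t)\<^sup>*" using conn v0 that by auto
    then show ?thesis
    proof (induction rule: rtrancl_induct)
      case base then show ?case using m(1) f0 image_eqI[of v0 f 0 "{0..<m}"] by simp
    next
      case (step y z) then show ?case using closed by blast
    qed
  qed
  have fimg: "?S = V" using cover fV by auto
  have bf: "bij_betw f {0..<m} V" using finj fimg unfolding bij_betw_def by simp
  define g where "g i = out (f i)" for i
  have gp: "g i \<in> A" "s (g i) = f i" for i using outp fV unfolding g_def by auto
  have ginj: "inj_on g {0..<m}"
  proof (rule inj_onI)
    fix x y assume "x \<in> {0..<m}" "y \<in> {0..<m}" "g x = g y"
    then show "x = y" using gp(2) finj by (metis inj_onD)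
  qed
  have gimg: "g ` {0..<m} = A"
  proof
    show "g ` {0..<m} \<subseteq> A" using gp by auto
    show "A \<subseteq> g ` {0..<m}"
    proof
      fix a assume a: "a \<in> A"
      then have "s a \<in> V" using AV by auto
      then obtain i where "i < m" "s a = f i" using fimg by auto
      then show "a \<in> g ` {0..<m}" using out_uniq[OF a] unfolding g_def by auto
    qed
  qed
  have bg: "bij_betw g {0..<m} A" using ginj gimg unfolding bij_betw_def by simp
  have arr: "\<forall>i<m. s (g i) = f i \<and> t (g i) = f ((i + 1) mod m)"
  proof (intro allI impI conjI)
    fix i assume i: "i < m"
    show "s (g i) = f i" by (rule gp(2))
    have tg: "t (g i) = f (Suc i)" using fSuc unfolding g_def nxt_def by simp
    show "t (g i) = f ((i + 1) mod m)"
    proof (cases "Suc i < m")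
      case True then show ?thesis using tg by simp
    next
      case False then have "Suc i = m" using i by simp
      then show ?thesis using tg m f0 by simp
    qed
  qed
  show ?thesis using bf bg arr m(1) unfolding is_cyclic_A_def
    by (intro exI[of _ m]) auto
qed

theorem lemma2p13:
  fixes n :: nat and V :: "'v set" and A :: "'a set" and s t :: "'a \<Rightarrow> 'v"
  assumes "n \<ge> 2"
    and "quiver V A s t"
    and "pre_admissible n V A s t"
  shows "has_flow_path V A s t \<longleftrightarrow>
           (\<not> is_A1 V A \<and> (\<forall>m\<ge>1. \<not> is_cyclic_A m V A s t))"
proof
  assume "has_flow_path V A s t"
  then obtain vs as where fp: "flow_path V A s t vs as" unfolding has_flow_path_def by blast
  then have len: "length as \<ge> 1" "set as \<subseteq> A" unfolding flow_path_def by auto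
  then have a0: "as ! 0 \<in> A" by (metis nth_mem less_le_trans zero_less_one subsetD)
  have s0: "s (as ! 0) = vs ! 0" "length vs \<ge> 2"
    using fp len unfolding flow_path_def by auto
  have "\<forall>i<length vs. deg A s t (vs ! i) = (1,1) \<longleftrightarrow> (0 < i \<and> i < length vs - 1)"
    using fp unfolding flow_path_def by blast
  moreover have "0 < length vs" using s0(2) by linarith
  ultimately have "deg A s t (vs ! 0) = (1,1) \<longleftrightarrow> (0 < (0::nat) \<and> 0 < length vs - 1)" by blast
  then have d0: "deg A s t (vs ! 0) \<noteq> (1,1)" by simp
  have AV0: "\<forall>a\<in>A. s a \<in> V" using assms(2) unfolding quiver_def by blast
  have "vs ! 0 \<in> V" using AV0 a0 s0(1) by force
  then have "\<forall>m\<ge>1. \<not> is_cyclic_A m V A s t"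
  proof (intro allI impI notI)
    fix m assume "vs ! 0 \<in> V" "is_cyclic_A m V A s t"
    then have "deg A s t (vs ! 0) = (1,1)" using cyc_mid by metis
    with d0 show False by simp
  qed
  moreover have "\<not> is_A1 V A" using a0 unfolding is_A1_def by auto
  ultimately show "\<not> is_A1 V A \<and> (\<forall>m\<ge>1. \<not> is_cyclic_A m V A s t)" by simp
next
  assume H: "\<not> is_A1 V A \<and> (\<forall>m\<ge>1. \<not> is_cyclic_A m V A s t)"
  have fin: "finite V" and AV: "\<forall>a\<in>A. s a \<in> V \<and> t a \<in> V" and ne: "V \<noteq> {}"
    and conn: "\<forall>u\<in>V. \<forall>w\<in>V. (u, w) \<in> (undirected_adj A s t)\<^sup>*"
    using assms(2) unfolding quiver_def by auto
  define M where "M v = (deg A s t v = (1,1))" for v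
  have Min: "indeg A t v = 1" "outdeg A s v = 1" if "M v" for v
    using that unfolding M_def deg_def by auto
  have "\<exists>u\<in>V. \<not> M u"
  proof (rule ccontr)
    assume "\<not> (\<exists>u\<in>V. \<not> M u)"
    then have "\<forall>v\<in>V. indeg A t v = 1 \<and> outdeg A s v = 1" using Min by blast
    then show False using all_mid_cyclic[OF assms(2)] H by blast
  qed
  then obtain u where u: "u \<in> V" "\<not> M u" by blast
  consider (o) a0 where "a0 \<in> A" "s a0 = u" | (i) a0 where "a0 \<in> A" "t a0 = u"
    | (none) "\<forall>a\<in>A. s a \<noteq> u \<and> t a \<noteq> u" by blast
  then show "has_flow_path V A s t"
  proof cases
    case o
    have out: "\<exists>b\<in>A. s b = v" if "M v" for v
      using card1_ex[OF Min(2)[OF that, unfolded outdeg_def]] unfolding outdeg_def by auto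
    have uniq: "a = b" if "a\<in>A" "b\<in>A" "M (t a)" "t a = t b" for a b
      using card1_uniq[OF Min(1)[OF that(3), unfolded indeg_def], of a b] that unfolding indeg_def by auto
    obtain k f g where W: "\<forall>i\<le>k. g i \<in> A \<and> s (g i) = f i \<and> t (g i) = f (Suc i)" "f 0 = u"
       "\<forall>i. 1 \<le> i \<and> i \<le> k \<longrightarrow> M (f i)" "\<not> M (f (Suc k))"
      using walk[of V A s t M u a0, OF fin AV out uniq u(2) o] by blast
    have "flow_path V A s t (map f [0..<Suc (Suc k)]) (map g [0..<Suc k])"
      unfolding flow_path_def
    proof (intro conjI allI impI)
      show "set (map g [0..<Suc k]) \<subseteq> A" using W(1) by auto
      fix i
      assume "i < length (map f [0..<Suc (Suc k)])"
      then have i: "i < Suc (Suc k)" by simp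
      show "(deg A s t (map f [0..<Suc (Suc k)] ! i) = (1, 1)) =
          (0 < i \<and> i < length (map f [0..<Suc (Suc k)]) - 1)"
        using i W(2-4) u(2) unfolding M_def[symmetric]
        by (cases "i = 0"; cases "i = Suc k"; simp add: nth_append)
    next
      fix i assume "i < length (map g [0..<Suc k])"
      then show "s (map g [0..<Suc k] ! i) = map f [0..<Suc (Suc k)] ! i"
        "t (map g [0..<Suc k] ! i) = map f [0..<Suc (Suc k)] ! (i + 1)"
        using W(1) by (auto simp del: upt_Suc)
    qed auto
    then show ?thesis unfolding has_flow_path_def by blast
  next
    case i
    have out: "\<exists>b\<in>A. t b = v" if "M v" for v
      using card1_ex[OF Min(1)[OF that, unfolded indeg_def]] unfolding indeg_def by auto
    have uniq: "a = b" if "a\<in>A" "b\<in>A" "M (s a)" "s a = s b" for a b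
      using card1_uniq[OF Min(2)[OF that(3), unfolded outdeg_def], of a b] that unfolding outdeg_def by auto
    have AV': "\<forall>a\<in>A. t a \<in> V \<and> s a \<in> V" using AV by auto
    obtain k f g where W: "\<forall>i\<le>k. g i \<in> A \<and> t (g i) = f i \<and> s (g i) = f (Suc i)" "f 0 = u"
       "\<forall>i. 1 \<le> i \<and> i \<le> k \<longrightarrow> M (f i)" "\<not> M (f (Suc k))"
      using walk[of V A t s M u a0, OF fin AV' out uniq u(2) i] by blast
    have "flow_path V A s t (map (\<lambda>i. f (Suc k - i)) [0..<Suc (Suc k)]) (map (\<lambda>i. g (k - i)) [0..<Suc k])"
      unfolding flow_path_def
    proof (intro conjI allI impI)
      show "set (map (\<lambda>i. g (k - i)) [0..<Suc k]) \<subseteq> A" using W(1) by auto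
      fix i
      assume "i < length (map (\<lambda>i. f (Suc k - i)) [0..<Suc (Suc k)])"
      then have i: "i < Suc (Suc k)" by simp
      show "(deg A s t (map (\<lambda>i. f (Suc k - i)) [0..<Suc (Suc k)] ! i) = (1, 1)) =
          (0 < i \<and> i < length (map (\<lambda>i. f (Suc k - i)) [0..<Suc (Suc k)]) - 1)"
      proof -
        have e: "map (\<lambda>i. f (Suc k - i)) [0..<Suc (Suc k)] ! i = f (Suc k - i)"
          using i by (simp del: upt_Suc)
        have "M (f (Suc k - i))" if "0 < i" "i < Suc k"
        proof -
          have "1 \<le> Suc k - i \<and> Suc k - i \<le> k" using that by arith
          then show ?thesis using W(3) by blast
        qed
        then show ?thesis unfolding e M_def[symmetric] using i W(2-4) u(2)
          by (cases "i = 0"; cases "i = Suc k"; simp)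
      qed
    next
      fix i assume "i < length (map (\<lambda>i. g (k - i)) [0..<Suc k])"
      then have i: "i \<le> k" by simp
      have g: "g (k - i) \<in> A \<and> t (g (k - i)) = f (k - i) \<and> s (g (k - i)) = f (Suc (k - i))"
        using W(1) by simp
      have e1: "Suc (k - i) = Suc k - i" using i by simp
      have e2: "Suc k - (i + 1) = k - i" by simp
      have n1: "map (\<lambda>i. g (k - i)) [0..<Suc k] ! i = g (k - i)"
        using i by (simp del: upt_Suc)
      have n2: "map (\<lambda>i. f (Suc k - i)) [0..<Suc (Suc k)] ! i = f (Suc k - i)"
        using i by (simp del: upt_Suc)
      have n3: "map (\<lambda>i. f (Suc k - i)) [0..<Suc (Suc k)] ! (i + 1) = f (Suc k - (i + 1))"
        using i by (simp del: upt_Suc)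
      show "s (map (\<lambda>i. g (k - i)) [0..<Suc k] ! i) = map (\<lambda>i. f (Suc k - i)) [0..<Suc (Suc k)] ! i"
        unfolding n1 n2 using g e1 by metis
      show "t (map (\<lambda>i. g (k - i)) [0..<Suc k] ! i) = map (\<lambda>i. f (Suc k - i)) [0..<Suc (Suc k)] ! (i + 1)"
        unfolding n1 n3 e2 using g by metis
    qed auto
    then show ?thesis unfolding has_flow_path_def by blast
  next
    case none
    have "V = {u}"
    proof
      show "V \<subseteq> {u}"
      proof
        fix w assume "w \<in> V"
        then have "(u, w) \<in> (undirected_adj A s t)\<^sup>*" using conn u by auto
        then show "w \<in> {u}"
        proof (cases rule: converse_rtranclE)
          case base then show ?thesis by simp
        next
          case (step y)
          then show ?thesis using none unfolding undirected_adj_def by auto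
        qed
      qed
    qed (use u in auto)
    moreover have "A = {}" using none AV calculation by auto
    ultimately have "is_A1 V A" unfolding is_A1_def by simp
    then show ?thesis using H by simp
  qed
qed

end
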